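(* For every graph $G$, $\pi_{T_w}(G)\le \min\{\pi(G),\pi'(G)\}+1$.
   Context: Graphs are finite and simple. A sequence is nonrepetitive if no block of consecutive terms has the form $r_1\dots r_nr_1\dots r_n$ with $n\ge1$. A vertex-colouring of $G$ is nonrepetitive if for every path $v_1,\dots,v_k$ of $G$ the colour sequence of its vertices is nonrepetitive; $\pi(G)$ (Thue chromatic number) is the minimum number of colours in such a colouring. Analogously an edge-colouring is nonrepetitive if the colour sequence of the edges of every path is nonrepetitive, and $\pi'(G)$ (Thue chromatic index) is the minimum number of colours in such a colouring. A weak total Thue colouring of $G$ is a colouring of $V(G)\cup E(G)$ such that for every path $v_1,e_1,v_2,\dots,e_{k-1},v_k$ in $G$ the sequence of colours of $v_1,e_1,v_2,e_2,\dots,v_k$ is nonrepetitive; $\pi_{T_w}(G)$ (weak total Thue chromatic number) is the minimum number of colours in such a colouring. *)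

theory Defs
  imports Main
begin

definition simple_graph :: "'a set \<Rightarrow> 'a set set \<Rightarrow> bool" where
  "simple_graph V E \<longleftrightarrow> finite V \<and> (\<forall>e\<in>E. \<exists>u v. e = {u, v} \<and> u \<noteq> v \<and> u \<in> V \<and> v \<in> V)"

definition nonrepetitive :: "'c list \<Rightarrow> bool" where
  "nonrepetitive s \<longleftrightarrow> \<not> (\<exists>xs ys zs. ys \<noteq> [] \<and> s = xs @ ys @ ys @ zs)"

definition is_path :: "'a set \<Rightarrow> 'a set set \<Rightarrow> 'a list \<Rightarrow> bool" where
  "is_path V E vs \<longleftrightarrow> vs \<noteq> [] \<and> distinct vs \<and> set vs \<subseteq> V \<and>
     (\<forall>i. Suc i < length vs \<longrightarrow> {vs ! i, vs ! Suc i} \<in> E)"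

fun path_edges :: "'a list \<Rightarrow> 'a set list" where
  "path_edges (u # v # vs) = {u, v} # path_edges (v # vs)"
| "path_edges _ = []"

fun total_seq :: "('a \<Rightarrow> 'c) \<Rightarrow> ('a set \<Rightarrow> 'c) \<Rightarrow> 'a list \<Rightarrow> 'c list" where
  "total_seq c d [] = []"
| "total_seq c d [v] = [c v]"
| "total_seq c d (u # v # vs) = c u # d {u, v} # total_seq c d (v # vs)"

definition nonrep_vertex_colouring :: "'a set \<Rightarrow> 'a set set \<Rightarrow> ('a \<Rightarrow> 'c) \<Rightarrow> bool" where
  "nonrep_vertex_colouring V E c \<longleftrightarrow> (\<forall>vs. is_path V E vs \<longrightarrow> nonrepetitive (map c vs))"

definition nonrep_edge_colouring :: "'a set \<Rightarrow> 'a set set \<Rightarrow> ('a set \<Rightarrow> 'c) \<Rightarrow> bool" where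
  "nonrep_edge_colouring V E d \<longleftrightarrow> (\<forall>vs. is_path V E vs \<longrightarrow> nonrepetitive (map d (path_edges vs)))"

definition weak_total_thue_colouring :: "'a set \<Rightarrow> 'a set set \<Rightarrow> ('a \<Rightarrow> 'c) \<Rightarrow> ('a set \<Rightarrow> 'c) \<Rightarrow> bool" where
  "weak_total_thue_colouring V E c d \<longleftrightarrow> (\<forall>vs. is_path V E vs \<longrightarrow> nonrepetitive (total_seq c d vs))"

definition thue_number :: "'a set \<Rightarrow> 'a set set \<Rightarrow> nat" where
  "thue_number V E = (LEAST k. \<exists>c :: 'a \<Rightarrow> nat. (\<forall>v\<in>V. c v < k) \<and> nonrep_vertex_colouring V E c)"

definition thue_index :: "'a set \<Rightarrow> 'a set set \<Rightarrow> nat" where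
  "thue_index V E = (LEAST k. \<exists>d :: 'a set \<Rightarrow> nat. (\<forall>e\<in>E. d e < k) \<and> nonrep_edge_colouring V E d)"

definition weak_total_thue_number :: "'a set \<Rightarrow> 'a set set \<Rightarrow> nat" where
  "weak_total_thue_number V E = (LEAST k. \<exists>(c :: 'a \<Rightarrow> nat) (d :: 'a set \<Rightarrow> nat).
      (\<forall>v\<in>V. c v < k) \<and> (\<forall>e\<in>E. d e < k) \<and> weak_total_thue_colouring V E c d)"

end

theory Submission
  imports Defs
begin

lemma rep_to_idx:
  assumes "ys \<noteq> []" "s = xs @ ys @ ys @ zs"
  shows "\<exists>i n. 0 < n \<and> i + 2*n \<le> length s \<and> (\<forall>j<n. s!(i+j) = s!(i+n+j))"
proof (intro exI conjI allI impI)
  show "0 < length ys" using assms by simp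
  show "length xs + 2 * length ys \<le> length s" using assms by simp
  fix j assume "j < length ys"
  then show "s ! (length xs + j) = s ! (length xs + length ys + j)"
    using assms by (simp add: nth_append)
qed

lemma idx_to_rep:
  assumes "0 < n" "i + 2*n \<le> length s" "\<forall>j<n. s!(i+j) = s!(i+n+j)"
  shows "\<not> nonrepetitive s"
proof -
  let ?xs = "take i s" and ?ys = "take n (drop i s)" and ?zs = "drop (i+2*n) s"
  have "s = ?xs @ ?ys @ ?ys @ ?zs"
  proof (rule nth_equalityI)
    show "length s = length (?xs @ ?ys @ ?ys @ ?zs)" using assms by simp
    fix k assume k: "k < length s"
    show "s ! k = (?xs @ ?ys @ ?ys @ ?zs) ! k"
    proof -
      consider "k < i" | "i \<le> k" "k < i+n" | "i + n \<le> k" "k < i + 2*n" | "i+2*n \<le> k" by linarith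
      then show ?thesis
      proof cases
        case 1 then show ?thesis using assms k by (simp add: nth_append)
      next
        case 2
        then have "k - i < n" by simp
        then show ?thesis using 2 assms k by (simp add: nth_append)
      next
        case 3
        then have "s ! k = s ! (i + (k - i - n))" using assms(3)[rule_format, of "k-i-n"] by simp
        moreover have "(?xs @ ?ys @ ?ys @ ?zs) ! k = ?ys ! (k - i - n)"
        proof -
          have lx: "length ?xs = i" and ly: "length ?ys = n" using assms by auto
          have kk: "k = length ?xs + (length ?ys + (k - i - n))" using lx ly 3 by simp
          have "(?xs @ ?ys @ ?ys @ ?zs) ! (length ?xs + (length ?ys + (k - i - n))) = ?ys ! (k - i - n)"
            unfolding nth_append_length_plus using 3 ly by (simp add: nth_append less_diff_conv2)
          then show ?thesis using kk by metis
        qed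
        moreover have "?ys ! (k - i - n) = s ! (i + (k - i - n))"
          using 3 assms by simp
        ultimately show ?thesis by simp
      next
        case 4
        then have "\<not> k - (i+n) < n" "\<not> k - i < n" "\<not> k < i" by auto
        then show ?thesis using 4 assms k by (simp add: nth_append)
      qed
    qed
  qed
  moreover have "?ys \<noteq> []" using assms by simp
  ultimately show ?thesis unfolding nonrepetitive_def by blast
qed

lemma total_len: "vs \<noteq> [] \<Longrightarrow> length (total_seq c d vs) = 2 * length vs - 1"
  by (induction c d vs rule: total_seq.induct) auto

lemma total_nth: "j < length (total_seq c d vs) \<Longrightarrow>
   total_seq c d vs ! j = (if even j then c (vs ! (j div 2)) else d {vs ! (j div 2), vs ! Suc (j div 2)})"
proof (induction c d vs arbitrary: j rule: total_seq.induct)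
  case (3 c d u v vs)
  show ?case
  proof (cases j)
    case 0 then show ?thesis by simp
  next
    case (Suc j1)
    show ?thesis
    proof (cases j1)
      case 0 then show ?thesis using Suc by simp
    next
      case (Suc j2)
      have "j2 < length (total_seq c d (v # vs))" using "3.prems" Suc \<open>j = Suc j1\<close> by simp
      from "3.IH"[OF this] show ?thesis using Suc \<open>j = Suc j1\<close>
        by (auto simp: nth_Cons split: nat.splits)
    qed
  qed
qed auto

lemma pe_len: "length (path_edges vs) = length vs - 1"
  by (induction vs rule: path_edges.induct) auto

lemma pe_nth: "j < length (path_edges vs) \<Longrightarrow> path_edges vs ! j = {vs ! j, vs ! Suc j}"
proof (induction vs arbitrary: j rule: path_edges.induct)
  case (1 u v vs)
  then show ?case by (cases j) auto
qed auto

lemma pe_sub: "e \<in> set (path_edges vs) \<Longrightarrow> e \<subseteq> set vs"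
  by (induction vs rule: path_edges.induct) auto

lemma pe_distinct: "distinct vs \<Longrightarrow> distinct (path_edges vs)"
  by (induction vs rule: path_edges.induct) (auto dest: pe_sub)

lemma distinct_nonrep: "distinct s \<Longrightarrow> nonrepetitive s"
  unfolding nonrepetitive_def by auto

lemma path_vertex: "is_path V E vs \<Longrightarrow> p < length vs \<Longrightarrow> vs ! p \<in> V"
  unfolding is_path_def by auto

lemma path_edge: "is_path V E vs \<Longrightarrow> Suc p < length vs \<Longrightarrow> {vs ! p, vs ! Suc p} \<in> E"
  unfolding is_path_def by auto

lemma vert_case:
  fixes c :: "'a \<Rightarrow> nat"
  assumes nr: "nonrep_vertex_colouring V E c" and ck: "\<forall>v\<in>V. c v < k"
  shows "weak_total_thue_colouring V E c (\<lambda>_. k)"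
  unfolding weak_total_thue_colouring_def
proof (intro allI impI)
  fix vs assume P: "is_path V E vs"
  let ?s = "total_seq c (\<lambda>_. k) vs"
  have ne: "vs \<noteq> []" using P unfolding is_path_def by auto
  have L: "length ?s = 2 * length vs - 1" using total_len[OF ne] .
  show "nonrepetitive ?s"
  proof (rule ccontr)
    assume "\<not> nonrepetitive ?s"
    then obtain xs ys zs where "ys \<noteq> []" "?s = xs @ ys @ ys @ zs" unfolding nonrepetitive_def by blast
    from rep_to_idx[OF this] obtain i n where n0: "0 < n" and ib: "i + 2*n \<le> length ?s"
      and eq: "\<forall>j<n. ?s!(i+j) = ?s!(i+n+j)" by blast
    have sv: "?s ! j = c (vs ! (j div 2))" "c (vs ! (j div 2)) < k" if "j < length ?s" "even j" for j
    proof -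
      show "?s ! j = c (vs ! (j div 2))" using total_nth[OF that(1)] that(2) by simp
      have "j div 2 < length vs" using that(1) L by simp
      then show "c (vs ! (j div 2)) < k" using ck path_vertex[OF P] by blast
    qed
    have se: "?s ! j = k" if "j < length ?s" "odd j" for j
      using total_nth[OF that(1)] that(2) by simp
    show False
    proof (cases "even n")
      case False
      have e0: "?s ! i = ?s ! (i + n)" using eq n0 by (metis add_0_right)
      have b1: "i < length ?s" "i + n < length ?s" using ib n0 by auto
      show False
      proof (cases "even i")
        case True
        then have "odd (i+n)" using False by simp
        then show False using sv[OF b1(1) True] se[OF b1(2) \<open>odd (i+n)\<close>] e0 by linarith
      next
        case odd: False
        then have "even (i+n)" using False by simp
        then show False using sv[OF b1(2) \<open>even (i+n)\<close>] se[OF b1(1) odd] e0 by linarith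
      qed
    next
      case True
      then obtain m where nm: "n = 2*m" by blast
      define i' where "i' = (i+1) div 2"
      have m0: "0 < m" using n0 nm by simp
      have i'b: "i' + 2*m \<le> length vs" using ib L nm unfolding i'_def by simp
      have "\<forall>j<m. map c vs ! (i'+j) = map c vs ! (i'+m+j)"
      proof (intro allI impI)
        fix j assume j: "j < m"
        define j' where "j' = 2*(i'+j) - i"
        have a1: "i + j' = 2*(i'+j)" "i + n + j' = 2*(i'+j+m)" "j' < n"
          using j nm unfolding j'_def i'_def by auto
        have b: "2*(i'+j) < length ?s" "2*(i'+j+m) < length ?s" using a1 ib by linarith+
        have "?s ! (2*(i'+j)) = ?s ! (2*(i'+j+m))" using eq a1 by metis
        then have "c (vs ! (i'+j)) = c (vs ! (i'+j+m))" using sv(1)[OF b(1)] sv(1)[OF b(2)] by simp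
        moreover have "i'+j < length vs" "i'+m+j < length vs" using i'b j by auto
        ultimately show "map c vs ! (i'+j) = map c vs ! (i'+m+j)" by (simp add: add.commute add.left_commute)
      qed
      then have "\<not> nonrepetitive (map c vs)" using idx_to_rep[of m i' "map c vs"] m0 i'b by simp
      then show False using nr P unfolding nonrep_vertex_colouring_def by blast
    qed
  qed
qed

lemma edge_case:
  fixes d :: "'a set \<Rightarrow> nat"
  assumes nr: "nonrep_edge_colouring V E d" and dk: "\<forall>e\<in>E. d e < k"
  shows "weak_total_thue_colouring V E (\<lambda>_. k) d"
  unfolding weak_total_thue_colouring_def
proof (intro allI impI)
  fix vs assume P: "is_path V E vs"
  let ?s = "total_seq (\<lambda>_. k) d vs"
  let ?e = "map d (path_edges vs)"
  have ne: "vs \<noteq> []" using P unfolding is_path_def by auto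
  have L: "length ?s = 2 * length vs - 1" using total_len[OF ne] .
  have Le: "length ?e = length vs - 1" by (simp add: pe_len)
  show "nonrepetitive ?s"
  proof (rule ccontr)
    assume "\<not> nonrepetitive ?s"
    then obtain xs ys zs where "ys \<noteq> []" "?s = xs @ ys @ ys @ zs" unfolding nonrepetitive_def by blast
    from rep_to_idx[OF this] obtain i n where n0: "0 < n" and ib: "i + 2*n \<le> length ?s"
      and eq: "\<forall>j<n. ?s!(i+j) = ?s!(i+n+j)" by blast
    have sv: "?s ! j = ?e ! (j div 2)" "?e ! (j div 2) < k" if "j < length ?s" "odd j" for j
    proof -
      have jl: "j div 2 < length (path_edges vs)" using that L pe_len[of vs] by (auto elim!: oddE)
      show "?s ! j = ?e ! (j div 2)" using total_nth[OF that(1)] that(2) pe_nth[OF jl] jl by simp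
      have "Suc (j div 2) < length vs" using jl pe_len[of vs] by simp
      then have "{vs ! (j div 2), vs ! Suc (j div 2)} \<in> E" using path_edge[OF P] by blast
      then show "?e ! (j div 2) < k" using dk pe_nth[OF jl] jl by simp
    qed
    have se: "?s ! j = k" if "j < length ?s" "even j" for j
      using total_nth[OF that(1)] that(2) by simp
    show False
    proof (cases "even n")
      case False
      have e0: "?s ! i = ?s ! (i + n)" using eq n0 by (metis add_0_right)
      have b1: "i < length ?s" "i + n < length ?s" using ib n0 by auto
      show False
      proof (cases "even i")
        case True
        then have "odd (i+n)" using False by simp
        then show False using sv[OF b1(2) \<open>odd (i+n)\<close>] se[OF b1(1) True] e0 by linarith
      next
        case odd: False
        then have "even (i+n)" using False by simp
        then show False using sv[OF b1(1) odd] se[OF b1(2) \<open>even (i+n)\<close>] e0 by linarith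
      qed
    next
      case True
      then obtain m where nm: "n = 2*m" by blast
      define i' where "i' = i div 2"
      have m0: "0 < m" using n0 nm by simp
      have i'b: "i' + 2*m \<le> length ?e" using ib L Le nm unfolding i'_def by simp
      have "\<forall>j<m. ?e ! (i'+j) = ?e ! (i'+m+j)"
      proof (intro allI impI)
        fix j assume j: "j < m"
        define j' where "j' = 2*(i'+j) + 1 - i"
        have a1: "i + j' = 2*(i'+j) + 1" "i + n + j' = 2*(i'+j+m) + 1" "j' < n"
          using j nm unfolding j'_def i'_def by auto
        have b: "2*(i'+j) + 1 < length ?s" "2*(i'+j+m) + 1 < length ?s" using a1 ib by linarith+
        have "?s ! (2*(i'+j) + 1) = ?s ! (2*(i'+j+m) + 1)" using eq a1 by metis
        then show "?e ! (i'+j) = ?e ! (i'+m+j)" using sv(1)[OF b(1)] sv(1)[OF b(2)]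
          by (simp add: add.commute add.left_commute)
      qed
      then have "\<not> nonrepetitive ?e" using idx_to_rep[of m i' ?e] m0 i'b by simp
      then show False using nr P unfolding nonrep_edge_colouring_def by blast
    qed
  qed
qed

lemma vex:
  assumes "finite V"
  shows "\<exists>k (c :: 'a \<Rightarrow> nat). (\<forall>v\<in>V. c v < k) \<and> nonrep_vertex_colouring V E c"
proof -
  obtain h :: "'a \<Rightarrow> nat" where h: "bij_betw h V {0..<card V}" using ex_bij_betw_finite_nat[OF assms] by blast
  have "nonrep_vertex_colouring V E h"
    unfolding nonrep_vertex_colouring_def
  proof (intro allI impI)
    fix vs assume P: "is_path V E vs"
    then have "inj_on h (set vs)" "distinct vs" using h unfolding is_path_def bij_betw_def
      by (auto intro: inj_on_subset)
    then show "nonrepetitive (map h vs)" by (intro distinct_nonrep) (simp add: distinct_map)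
  qed
  moreover have "\<forall>v\<in>V. h v < card V" using h unfolding bij_betw_def by auto
  ultimately show ?thesis by blast
qed

lemma eex:
  assumes "simple_graph V E"
  shows "\<exists>k (d :: 'a set \<Rightarrow> nat). (\<forall>e\<in>E. d e < k) \<and> nonrep_edge_colouring V E d"
proof -
  have "E \<subseteq> Pow V" using assms unfolding simple_graph_def by auto
  moreover have "finite V" using assms unfolding simple_graph_def by auto
  ultimately have fE: "finite E" by (meson finite_Pow_iff finite_subset)
  obtain h :: "'a set \<Rightarrow> nat" where h: "bij_betw h E {0..<card E}" using ex_bij_betw_finite_nat[OF fE] by blast
  have "nonrep_edge_colouring V E h"
    unfolding nonrep_edge_colouring_def
  proof (intro allI impI)
    fix vs assume P: "is_path V E vs"
    have sub: "set (path_edges vs) \<subseteq> E"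
    proof
      fix e assume "e \<in> set (path_edges vs)"
      then obtain p where p: "p < length (path_edges vs)" "e = path_edges vs ! p" by (auto simp: in_set_conv_nth)
      then have "e = {vs ! p, vs ! Suc p}" "Suc p < length vs" using pe_nth[OF p(1)] p pe_len[of vs] by auto
      then show "e \<in> E" using path_edge[OF P] by simp
    qed
    have "inj_on h (set (path_edges vs))" using h sub unfolding bij_betw_def by (auto intro: inj_on_subset)
    moreover have "distinct (path_edges vs)" using P pe_distinct unfolding is_path_def by auto
    ultimately show "nonrepetitive (map h (path_edges vs))" by (intro distinct_nonrep) (simp add: distinct_map)
  qed
  moreover have "\<forall>e\<in>E. h e < card E" using h unfolding bij_betw_def by auto
  ultimately show ?thesis by blast
qed

theorem mainTheorem2:
  fixes V :: "'a set" and E :: "'a set set"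
  assumes "simple_graph V E"
  shows "weak_total_thue_number V E \<le> min (thue_number V E) (thue_index V E) + 1"
proof -
  have fV: "finite V" using assms unfolding simple_graph_def by auto
  obtain c :: "'a \<Rightarrow> nat" where c: "\<forall>v\<in>V. c v < thue_number V E" "nonrep_vertex_colouring V E c"
    using LeastI_ex[OF vex[OF fV, of E]] unfolding thue_number_def by blast
  obtain d :: "'a set \<Rightarrow> nat" where d: "\<forall>e\<in>E. d e < thue_index V E" "nonrep_edge_colouring V E d"
    using LeastI_ex[OF eex[OF assms]] unfolding thue_index_def by blast
  have w1: "weak_total_thue_colouring V E c (\<lambda>_. thue_number V E)"
    using vert_case[OF c(2) c(1)] .
  have w2: "weak_total_thue_colouring V E (\<lambda>_. thue_index V E) d"
    using edge_case[OF d(2) d(1)] .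
  have "weak_total_thue_number V E \<le> thue_number V E + 1"
    unfolding weak_total_thue_number_def
    by (rule Least_le) (use c(1) w1 in \<open>intro exI[of _ c] exI[of _ "\<lambda>_. thue_number V E"], auto\<close>)
  moreover have "weak_total_thue_number V E \<le> thue_index V E + 1"
    unfolding weak_total_thue_number_def
    by (rule Least_le) (use d(1) w2 in \<open>intro exI[of _ "\<lambda>_. thue_index V E"] exI[of _ d], auto\<close>)
  ultimately show ?thesis by simp
qed

end
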